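(* Let $k\ge 1$, $a_1,\dots,a_k,b_1,\dots,b_k,c_1,\dots,c_k\in\mathbb{C}$, and let $T(f)$ be the tridiagonal $k$-Toeplitz operator on $\ell^2(\mathbb{N})$ with symbol $f(z)=A_{-1}z^{-1}+A_0+A_1z$ (notation in the context). Assume that $\det f(z)$ does not vanish identically on the unit circle $\mathbb{T}$. Then at least one of the following holds: (i) $T(f)$ has trivial kernel; (ii) $T(f)$ has dense range; (iii) the leading $(k-1)\times(k-1)$ principal submatrix of $A_0$ has a nonzero kernel; in particular, there exists $z_0\in\mathbb{C}\cup\{\infty\}$ such that $\ker(z_0^{-1}A_{-1}+A_0)\cap\ker(A_1)\neq\{0\}$.
   Context: The tridiagonal $k$-Toeplitz operator $T(f)$ is the operator on $\ell^2(\mathbb{N})$ (indices $1,2,\dots$) given by the infinite matrix with entries $(i,i)=a_{p(i)}$, $(i,i+1)=b_{p(i)}$, $(i+1,i)=c_{p(i)}$, where $p(i)=((i-1)\bmod k)+1$, and all other entries zero. Equivalently it is the block Toeplitz operator with $k\times k$ blocks $A_0$ on the block diagonal, $A_{-1}$ on the block superdiagonal and $A_1$ on the block subdiagonal, where $A_0$ is the $k\times k$ tridiagonal matrix with diagonal $a_1,\dots,a_k$, superdiagonal $b_1,\dots,b_{k-1}$ and subdiagonal $c_1,\dots,c_{k-1}$; $A_{-1}$ has the single nonzero entry $b_k$ in position $(k,1)$; $A_1$ has the single nonzero entry $c_k$ in position $(1,k)$. The symbol is $f(z)=A_{-1}z^{-1}+A_0+A_1z$, i.e. $A_0$ with $c_kz$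 added in position $(1,k)$ and $b_kz^{-1}$ added in position $(k,1)$ (for $k=1$, $f(z)=a_1+c_1z+b_1z^{-1}$). $\mathbb{T}=\{z\in\mathbb{C}:|z|=1\}$. *)

theory Defs
  imports Complex_Main "Jordan_Normal_Form.Determinant"
begin

text \<open>Conventions: indices are 0-based. The parameters a_1..a_k, b_1..b_k, c_1..c_k of the
paper are given as functions a b c :: nat => complex, with a j = a_(j+1) for j < k
(values at j >= k are irrelevant). Sequences in l2(N) are functions nat => complex,
the paper's index i corresponding to n = i - 1.\<close>

definition is_l2 :: "(nat \<Rightarrow> complex) \<Rightarrow> bool" where
  "is_l2 x \<longleftrightarrow> summable (\<lambda>n. (cmod (x n))\<^sup>2)"

definition l2_norm :: "(nat \<Rightarrow> complex) \<Rightarrow> real" where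
  "l2_norm x = sqrt (\<Sum>n. (cmod (x n))\<^sup>2)"

definition ktoep_apply ::
  "nat \<Rightarrow> (nat \<Rightarrow> complex) \<Rightarrow> (nat \<Rightarrow> complex) \<Rightarrow> (nat \<Rightarrow> complex) \<Rightarrow> (nat \<Rightarrow> complex) \<Rightarrow> nat \<Rightarrow> complex"
  where
  "ktoep_apply k a b c x n =
     a (n mod k) * x n + b (n mod k) * x (Suc n)
     + (if n = 0 then 0 else c ((n - 1) mod k) * x (n - 1))"

definition A0 :: "nat \<Rightarrow> (nat \<Rightarrow> complex) \<Rightarrow> (nat \<Rightarrow> complex) \<Rightarrow> (nat \<Rightarrow> complex) \<Rightarrow> complex mat" where
  "A0 k a b c = mat k k (\<lambda>(i, j).
      (if i = j then a i else 0)
    + (if j = Suc i then b i else 0)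
    + (if i = Suc j then c j else 0))"

text \<open>Symbol f(z) = A_(-1) z^(-1) + A_0 + A_1 z: A_0 with c_k z added at (1,k) and
b_k z^(-1) added at (k,1) (1-based), i.e. positions (0,k-1) and (k-1,0) 0-based.\<close>
definition symbol :: "nat \<Rightarrow> (nat \<Rightarrow> complex) \<Rightarrow> (nat \<Rightarrow> complex) \<Rightarrow> (nat \<Rightarrow> complex) \<Rightarrow> complex \<Rightarrow> complex mat" where
  "symbol k a b c z = mat k k (\<lambda>(i, j).
      A0 k a b c $$ (i, j)
    + (if i = 0 \<and> j = k - 1 then c (k - 1) * z else 0)
    + (if i = k - 1 \<and> j = 0 then b (k - 1) / z else 0))"

definition trivial_kernel :: "nat \<Rightarrow> (nat \<Rightarrow> complex) \<Rightarrow> (nat \<Rightarrow> complex) \<Rightarrow> (nat \<Rightarrow> complex) \<Rightarrow> bool" where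
  "trivial_kernel k a b c \<longleftrightarrow>
     (\<forall>x. is_l2 x \<and> ktoep_apply k a b c x = (\<lambda>_. 0) \<longrightarrow> x = (\<lambda>_. 0))"

definition dense_range :: "nat \<Rightarrow> (nat \<Rightarrow> complex) \<Rightarrow> (nat \<Rightarrow> complex) \<Rightarrow> (nat \<Rightarrow> complex) \<Rightarrow> bool" where
  "dense_range k a b c \<longleftrightarrow>
     (\<forall>y. is_l2 y \<longrightarrow> (\<forall>\<epsilon>>0. \<exists>x. is_l2 x \<and>
        l2_norm (\<lambda>n. ktoep_apply k a b c x n - y n) < \<epsilon>))"

end

theory Submission
  imports Defs "HOL-Computational_Algebra.Polynomial_FPS"
begin


interpretation fpsh: comm_ring_hom "fps_of_poly :: complex poly \<Rightarrow> complex fps"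
  by unfold_locales (simp_all add: fps_of_poly_add fps_of_poly_mult)
interpretation evh: comm_ring_hom "\<lambda>p::complex poly. poly p z" for z
  by unfold_locales simp_all

lemma tri_sum:
  fixes a b c v :: "nat \<Rightarrow> complex"
  assumes "i < n"
  shows "(\<Sum>j<n. ((if i = j then a i else 0) + (if j = Suc i then b i else 0)
            + (if i = Suc j then c j else 0)) * v j)
       = a i * v i + (if Suc i < n then b i * v (Suc i) else 0)
         + (if 1 \<le> i then c (i - 1) * v (i - 1) else 0)"
proof -
  have e1: "(\<Sum>j<n. (if i = j then a i else 0) * v j) = a i * v i"
  proof -
    have "(\<Sum>j<n. (if i = j then a i else 0) * v j) = (\<Sum>j<n. if i = j then a i * v j else 0)"
      by (rule sum.cong) auto
    thus ?thesis using assms by (simp add: sum.delta)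
  qed
  have e2: "(\<Sum>j<n. (if j = Suc i then b i else 0) * v j) = (if Suc i < n then b i * v (Suc i) else 0)"
  proof -
    have "(\<Sum>j<n. (if j = Suc i then b i else 0) * v j) = (\<Sum>j<n. if j = Suc i then b i * v j else 0)"
      by (rule sum.cong) auto
    thus ?thesis by (simp add: sum.delta')
  qed
  have e3: "(\<Sum>j<n. (if i = Suc j then c j else 0) * v j) = (if 1 \<le> i then c (i - 1) * v (i - 1) else 0)"
  proof -
    have "(\<Sum>j<n. (if i = Suc j then c j else 0) * v j) = (\<Sum>j<n. if j = i - 1 \<and> 1 \<le> i then c j * v j else 0)"
      by (rule sum.cong) auto
    also have "\<dots> = (if 1 \<le> i then c (i - 1) * v (i - 1) else 0)"
      using assms by (cases "1 \<le> i") (simp_all add: sum.delta')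
    finally show ?thesis .
  qed
  show ?thesis
    by (simp only: distrib_right sum.distrib e1 e2 e3)
qed

lemma fps_quad_nth:
  fixes F :: "complex fps"
  shows "fps_nth (fps_of_poly [:\<alpha>, \<beta>, \<gamma>:] * F) m
   = \<alpha> * fps_nth F m + (if m = 0 then 0 else \<beta> * fps_nth F (m - 1))
     + (if m < 2 then 0 else \<gamma> * fps_nth F (m - 2))"
proof -
  have "fps_of_poly [:\<alpha>, \<beta>, \<gamma>:] = fps_const \<alpha> + fps_X * fps_const \<beta> + fps_X ^ 2 * fps_const \<gamma>"
    by (simp add: fps_of_poly_pCons algebra_simps power2_eq_square)
  then have "fps_of_poly [:\<alpha>, \<beta>, \<gamma>:] * F = fps_const \<alpha> * F + fps_X * (fps_const \<beta> * F) + fps_X ^ 2 * (fps_const \<gamma> * F)"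
    by (simp only: distrib_right mult.assoc)
  thus ?thesis
    by (simp only: fps_add_nth fps_X_mult_nth fps_X_power_mult_nth fps_mult_left_const_nth)
qed

definition Qp :: "nat \<Rightarrow> (nat \<Rightarrow> complex) \<Rightarrow> (nat \<Rightarrow> complex) \<Rightarrow> (nat \<Rightarrow> complex) \<Rightarrow> complex poly mat" where
  "Qp k a b c = mat k k (\<lambda>(i,j). [: (if i = k - 1 \<and> j = 0 then b (k - 1) else 0),
      A0 k a b c $$ (i,j), (if i = 0 \<and> j = k - 1 then c (k - 1) else 0) :])"

lemma A0_entry: "i < k \<Longrightarrow> j < k \<Longrightarrow> A0 k a b c $$ (i,j) =
   (if i = j then a i else 0) + (if j = Suc i then b i else 0) + (if i = Suc j then c j else 0)"
  by (simp add: A0_def)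

lemma row_eq:
  fixes x a b c :: "nat \<Rightarrow> complex" and m k i :: nat
  assumes k: "k \<ge> 1" and i: "i < k"
  shows "(\<Sum>j<k. fps_nth (fps_of_poly (Qp k a b c $$ (i,j)) * Abs_fps (\<lambda>m. x (m*k+j))) m)
     = (if m = 0 then (if i = k - 1 then b (k - 1) * x 0 else 0) else ktoep_apply k a b c x ((m - 1) * k + i))"
proof -
  define al where "al j = (if i = k - 1 \<and> j = 0 then b (k - 1) else 0)" for j :: nat
  define be where "be j = A0 k a b c $$ (i,j)" for j :: nat
  define ga where "ga j = (if i = 0 \<and> j = k - 1 then c (k - 1) else 0)" for j :: nat
  have "(\<Sum>j<k. fps_nth (fps_of_poly (Qp k a b c $$ (i,j)) * Abs_fps (\<lambda>m. x (m*k+j))) m)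
     = (\<Sum>j<k. al j * x (m*k+j) + (if m = 0 then 0 else be j * x ((m-1)*k+j))
           + (if m < 2 then 0 else ga j * x ((m-2)*k+j)))"
    by (rule sum.cong) (use i in \<open>simp_all add: Qp_def fps_quad_nth al_def be_def ga_def\<close>)
  also have "\<dots> = (\<Sum>j<k. al j * x (m*k+j)) + (if m = 0 then 0 else (\<Sum>j<k. be j * x ((m-1)*k+j)))
           + (if m < 2 then 0 else (\<Sum>j<k. ga j * x ((m-2)*k+j)))"
    by (simp add: sum.distrib)
  also have "(\<Sum>j<k. al j * x (m*k+j)) = (if i = k - 1 then b (k - 1) * x (m*k) else 0)"
  proof -
    have "(\<Sum>j<k. al j * x (m*k+j)) = (\<Sum>j<k. if j = 0 then (if i = k - 1 then b (k - 1) * x (m*k) else 0) else 0)"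
      by (rule sum.cong) (auto simp: al_def)
    thus ?thesis using k by (simp add: sum.delta')
  qed
  also have "(\<Sum>j<k. ga j * x ((m-2)*k+j)) = (if i = 0 then c (k - 1) * x ((m-2)*k + (k - 1)) else 0)"
  proof -
    have "(\<Sum>j<k. ga j * x ((m-2)*k+j)) = (\<Sum>j<k. if j = k - 1 then (if i = 0 then c (k - 1) * x ((m-2)*k + (k - 1)) else 0) else 0)"
      by (rule sum.cong) (auto simp: ga_def)
    thus ?thesis using k by (simp add: sum.delta')
  qed
  also have "(\<Sum>j<k. be j * x ((m-1)*k+j)) = a i * x ((m-1)*k+i) + (if Suc i < k then b i * x ((m-1)*k + Suc i) else 0)
         + (if 1 \<le> i then c (i - 1) * x ((m-1)*k + (i - 1)) else 0)"
  proof -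
    have "(\<Sum>j<k. be j * x ((m-1)*k+j)) = (\<Sum>j<k. ((if i = j then a i else 0) + (if j = Suc i then b i else 0)
            + (if i = Suc j then c j else 0)) * x ((m-1)*k+j))"
      by (rule sum.cong) (use i in \<open>auto simp: be_def A0_entry\<close>)
    also have "\<dots> = a i * x ((m-1)*k+i) + (if Suc i < k then b i * x ((m-1)*k + Suc i) else 0)
         + (if 1 \<le> i then c (i - 1) * x ((m-1)*k + (i - 1)) else 0)"
      by (rule tri_sum[OF i])
    finally show ?thesis .
  qed
  finally have L: "(\<Sum>j<k. fps_nth (fps_of_poly (Qp k a b c $$ (i,j)) * Abs_fps (\<lambda>m. x (m*k+j))) m)
    = (if i = k - 1 then b (k - 1) * x (m*k) else 0) +
      (if m = 0 then 0 else a i * x ((m-1)*k+i) + (if Suc i < k then b i * x ((m-1)*k + Suc i) else 0)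
         + (if 1 \<le> i then c (i - 1) * x ((m-1)*k + (i - 1)) else 0)) +
      (if m < 2 then 0 else (if i = 0 then c (k - 1) * x ((m-2)*k + (k - 1)) else 0))" .
  show ?thesis
  proof (cases "m = 0")
    case True thus ?thesis using L by simp
  next
    case False
    define p where "p = (m - 1) * k + i"
    have pmod: "p mod k = i" using i by (simp add: p_def)
    obtain m1 where m1: "m = Suc m1" using False not0_implies_Suc by blast
    have mk: "m * k = p + (k - i)" using i by (simp add: p_def m1)
    have bterm: "(if i = k - 1 then b (k - 1) * x (m*k) else 0) + (if Suc i < k then b i * x ((m-1)*k + Suc i) else 0)
        = b i * x (Suc p)"
      using i mk by (auto simp: p_def)
    have cterm: "(if 1 \<le> i then c (i - 1) * x ((m-1)*k + (i - 1)) else 0) + (if m < 2 then 0 else (if i = 0 then c (k - 1) * x ((m-2)*k + (k - 1)) else 0))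
        = (if p = 0 then 0 else c ((p - 1) mod k) * x (p - 1))"
    proof (cases "1 \<le> i")
      case True
      have e: "p - 1 = (m-1)*k + (i - 1)" using True by (simp add: p_def)
      have "(p - 1) mod k = i - 1" unfolding e using i by simp
      moreover have "p \<noteq> 0" using True by (simp add: p_def)
      ultimately show ?thesis using True e by simp
    next
      case ni: False
      hence i0: "i = 0" by simp
      show ?thesis
      proof (cases "m < 2")
        case True
        hence "p = 0" using False i0 by (simp add: p_def)
        thus ?thesis using True i0 by simp
      next
        case m2: False
        obtain m' where m': "m = Suc (Suc m')" using m2 by (metis less_2_cases_iff not0_implies_Suc)
        have "p = Suc m' * k" using m' i0 by (simp add: p_def)
        hence "p \<noteq> 0" "p - 1 = m' * k + (k - 1)" using k by auto
        moreover have "(m' * k + (k - 1)) mod k = k - 1"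
        proof -
          have "(m' * k + (k - 1)) mod k = (k - 1) mod k" by (simp only: mod_mult_self3)
          thus ?thesis using k by simp
        qed
        ultimately show ?thesis using i0 m' m2 by simp
      qed
    qed
    have "ktoep_apply k a b c x p = a i * x p + b i * x (Suc p) + (if p = 0 then 0 else c ((p - 1) mod k) * x (p - 1))"
      by (simp add: ktoep_apply_def pmod)
    thus ?thesis using L False bterm cterm by (simp add: p_def algebra_simps)
  qed
qed


lemma ker_zero:
  fixes x a b c :: "nat \<Rightarrow> complex" and k :: nat
  assumes k: "k \<ge> 1" and z: "\<exists>z. cmod z = 1 \<and> det (symbol k a b c z) \<noteq> 0"
    and T: "\<And>n. ktoep_apply k a b c x n = 0" and x0: "b (k - 1) * x 0 = 0"
  shows "x n = 0"
proof -
  obtain z0 where z0: "cmod z0 = 1" "det (symbol k a b c z0) \<noteq> 0" using z by blast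
  have z0nz: "z0 \<noteq> 0" using z0 by auto
  have Qc: "Qp k a b c \<in> carrier_mat k k" by (simp add: Qp_def)
  have ev: "evh.mat_hom z0 (Qp k a b c) = z0 \<cdot>\<^sub>m symbol k a b c z0"
  proof (rule eq_matI)
    fix i j assume ij: "i < dim_row (z0 \<cdot>\<^sub>m symbol k a b c z0)" "j < dim_col (z0 \<cdot>\<^sub>m symbol k a b c z0)"
    hence "i < k" "j < k" by (auto simp: symbol_def)
    thus "evh.mat_hom z0 (Qp k a b c) $$ (i, j) = (z0 \<cdot>\<^sub>m symbol k a b c z0) $$ (i, j)"
      using z0nz by (simp add: Qp_def symbol_def algebra_simps)
  qed (auto simp: Qp_def symbol_def)
  have "poly (det (Qp k a b c)) z0 = det (z0 \<cdot>\<^sub>m symbol k a b c z0)"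
    using ev evh.hom_det by metis
  also have "\<dots> = z0 ^ k * det (symbol k a b c z0)" by (simp add: symbol_def)
  finally have "poly (det (Qp k a b c)) z0 \<noteq> 0" using z0 z0nz by simp
  hence "det (Qp k a b c) \<noteq> 0" by auto
  hence dQ: "det (fpsh.mat_hom (Qp k a b c)) \<noteq> 0"
    by (simp add: fps_of_poly_eq_iff[of _ 0, simplified])
  define Xf where "Xf = vec k (\<lambda>j. Abs_fps (\<lambda>m. x (m*k+j)))"
  have QX: "fpsh.mat_hom (Qp k a b c) *\<^sub>v Xf = 0\<^sub>v k"
  proof (rule eq_vecI)
    fix i assume "i < dim_vec (0\<^sub>v k :: complex fps vec)"
    hence i: "i < k" by simp
    show "(fpsh.mat_hom (Qp k a b c) *\<^sub>v Xf) $ i = 0\<^sub>v k $ i"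
    proof -
      have "(fpsh.mat_hom (Qp k a b c) *\<^sub>v Xf) $ i = (\<Sum>j<k. fps_of_poly (Qp k a b c $$ (i,j)) * Abs_fps (\<lambda>m. x (m*k+j)))"
        using i Qc by (simp add: scalar_prod_def Xf_def lessThan_atLeast0)
      also have "\<dots> = 0"
      proof (rule fps_ext)
        fix m
        show "fps_nth (\<Sum>j<k. fps_of_poly (Qp k a b c $$ (i,j)) * Abs_fps (\<lambda>m. x (m*k+j))) m = fps_nth 0 m"
          using row_eq[OF k i, of a b c x m] T x0 by (simp add: fps_sum_nth)
      qed
      finally show ?thesis using i by simp
    qed
  qed (simp add: Qp_def)
  have "Xf = 0\<^sub>v k"
  proof (rule ccontr)
    assume "Xf \<noteq> 0\<^sub>v k"
    moreover have "Xf \<in> carrier_vec k" by (simp add: Xf_def)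
    moreover have "fpsh.mat_hom (Qp k a b c) \<in> carrier_mat k k" using Qc by simp
    ultimately have "det (fpsh.mat_hom (Qp k a b c)) = 0"
      using QX det_0_iff_vec_prod_zero by blast
    thus False using dQ by simp
  qed
  hence "fps_nth (Xf $ (n mod k)) (n div k) = 0" using k by simp
  moreover have "fps_nth (Xf $ (n mod k)) (n div k) = x n"
    using k by (simp add: Xf_def)
  ultimately show ?thesis by simp
qed



lemma l2_add: "is_l2 x \<Longrightarrow> is_l2 y \<Longrightarrow> is_l2 (\<lambda>n. x n + y n)"
  unfolding is_l2_def
proof -
  assume sx: "summable (\<lambda>n. (cmod (x n))\<^sup>2)" and sy: "summable (\<lambda>n. (cmod (y n))\<^sup>2)"
  have S: "summable (\<lambda>n. 2 * (cmod (x n))\<^sup>2 + 2 * (cmod (y n))\<^sup>2)"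
    using sx sy by (intro summable_add summable_mult) 
  have B: "norm ((cmod (x n + y n))\<^sup>2) \<le> 2 * (cmod (x n))\<^sup>2 + 2 * (cmod (y n))\<^sup>2" for n
  proof -
    have "cmod (x n + y n) \<le> cmod (x n) + cmod (y n)" by (rule norm_triangle_ineq)
    hence "(cmod (x n + y n))\<^sup>2 \<le> (cmod (x n) + cmod (y n))\<^sup>2" by (simp add: power_mono)
    also have "\<dots> \<le> 2 * (cmod (x n))\<^sup>2 + 2 * (cmod (y n))\<^sup>2"
    proof -
      have h: "0 \<le> (cmod (x n) - cmod (y n))\<^sup>2" by simp
      thus ?thesis unfolding power2_sum power2_diff by linarith
    qed
    finally show ?thesis by simp
  qed
  show "summable (\<lambda>n. (cmod (x n + y n))\<^sup>2)"
    by (rule summable_comparison_test[OF _ S]) (use B in blast)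
qed

lemma l2_scale: "is_l2 x \<Longrightarrow> is_l2 (\<lambda>n. \<alpha> * x n)"
  unfolding is_l2_def by (simp add: norm_mult power_mult_distrib summable_mult)

lemma l2_fin: "(\<And>n. n \<ge> N \<Longrightarrow> x n = 0) \<Longrightarrow> is_l2 x"
  unfolding is_l2_def
  by (rule summable_finite[of "{..<N}"]) auto

lemma l2_shift: "is_l2 x \<Longrightarrow> is_l2 (\<lambda>n. if n < s then 0 else x (n - s))"
  unfolding is_l2_def
proof -
  assume "summable (\<lambda>n. (cmod (x n))\<^sup>2)"
  moreover have "(\<lambda>n. (cmod (if n + s < s then 0 else x (n + s - s)))\<^sup>2) = (\<lambda>n. (cmod (x n))\<^sup>2)" by simp
  ultimately show "summable (\<lambda>n. (cmod (if n < s then 0 else x (n - s)))\<^sup>2)"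
    using summable_iff_shift[of "\<lambda>n. (cmod (if n < s then 0 else x (n - s)))\<^sup>2" s] by simp
qed

lemma ktoep_comb: "ktoep_apply k a b c (\<lambda>n. x n + \<alpha> * y n) p = ktoep_apply k a b c x p + \<alpha> * ktoep_apply k a b c y p"
  by (simp add: ktoep_apply_def algebra_simps)

lemma ktoep_scale: "ktoep_apply k a b c (\<lambda>n. \<alpha> * y n) p = \<alpha> * ktoep_apply k a b c y p"
  by (simp add: ktoep_apply_def algebra_simps)

definition inR where "inR k a b c y \<longleftrightarrow> (\<exists>x. is_l2 x \<and> (\<forall>n. ktoep_apply k a b c x n = y n))"

lemma inR_comb: "inR k a b c y1 \<Longrightarrow> inR k a b c y2 \<Longrightarrow> inR k a b c (\<lambda>n. y1 n + \<alpha> * y2 n)"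
  unfolding inR_def
proof (elim exE conjE)
  fix x1 x2 assume "is_l2 x1" "\<forall>n. ktoep_apply k a b c x1 n = y1 n" "is_l2 x2" "\<forall>n. ktoep_apply k a b c x2 n = y2 n"
  thus "\<exists>x. is_l2 x \<and> (\<forall>n. ktoep_apply k a b c x n = y1 n + \<alpha> * y2 n)"
    by (intro exI[of _ "\<lambda>n. x1 n + \<alpha> * x2 n"]) (simp add: ktoep_comb l2_add l2_scale)
qed

lemma inR_zero: "inR k a b c (\<lambda>n. 0)"
  unfolding inR_def by (rule exI[of _ "\<lambda>n. 0"]) (simp add: ktoep_apply_def l2_fin)


lemma shift_apply:
  fixes x a b c :: "nat \<Rightarrow> complex" and k j :: nat
  assumes k: "k \<ge> 1" and j: "j \<ge> 1" and T: "\<And>n. ktoep_apply k a b c x n = 0"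
  shows "ktoep_apply k a b c (\<lambda>n. if n < j * k then 0 else x (n - j * k)) p
         = (if p = j * k - 1 then b (k - 1) * x 0 else 0)"
proof -
  define u where "u = (\<lambda>n. if n < j * k then 0 else x (n - j * k))"
  have jk: "j * k \<ge> 1" using j k by (simp add: one_le_mult_iff)
  consider (lt) "p < j * k - 1" | (eq) "p = j * k - 1" | (ge) q where "p = j * k + q"
  proof -
    have c3: "p < j * k - 1 \<or> p = j * k - 1 \<or> j * k \<le> p" using jk by linarith
    thus thesis using that le_add_diff_inverse by metis
  qed
  thus ?thesis
  proof cases
    case lt
    hence "u p = 0" "u (Suc p) = 0" "u (p - 1) = 0" by (auto simp: u_def)
    thus ?thesis using lt by (simp add: ktoep_apply_def u_def[symmetric])
  next
    case eq
    have "(j * k - 1) mod k = k - 1"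
    proof -
      obtain j1 where j1: "j = Suc j1" using j by (cases j) auto
      have "j * k - 1 = j1 * k + (k - 1)" using k by (simp add: j1)
      hence "(j * k - 1) mod k = (k - 1) mod k" by (simp only: mod_mult_self3)
      thus ?thesis using k by simp
    qed
    moreover have "u p = 0" "u (Suc p) = x 0" "u (p - 1) = 0" using eq jk by (auto simp: u_def)
    ultimately show ?thesis using eq by (simp add: ktoep_apply_def u_def[symmetric])
  next
    case ge
    have pm: "p mod k = q mod k" using ge by simp
    show ?thesis
    proof (cases "q = 0")
      case True
      have "u p = x 0" "u (Suc p) = x 1" "u (p - 1) = 0" using ge True jk by (auto simp: u_def)
      moreover have "ktoep_apply k a b c x 0 = 0" by (rule T)
      moreover have "p \<noteq> j * k - 1" using ge True jk by linarith
      ultimately show ?thesis using ge True jk pm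
        by (simp add: ktoep_apply_def u_def[symmetric])
    next
      case False
      have "u p = x q" "u (Suc p) = x (Suc q)" "u (p - 1) = x (q - 1)" using ge False by (auto simp: u_def)
      moreover have "(p - 1) mod k = (q - 1) mod k"
      proof -
        have "p - 1 = j * k + (q - 1)" using ge False by simp
        thus ?thesis by simp
      qed
      moreover have "ktoep_apply k a b c x q = 0" by (rule T)
      moreover have "p \<noteq> j * k - 1" "p \<noteq> 0" using ge False by auto
      ultimately show ?thesis using False pm
        by (simp add: ktoep_apply_def u_def[symmetric])
    qed
  qed
qed

lemma E1:
  fixes x a b c :: "nat \<Rightarrow> complex" and k j :: nat
  assumes k: "k \<ge> 1" and j: "j \<ge> 1" and T: "\<And>n. ktoep_apply k a b c x n = 0"
    and l2: "is_l2 x" and beta: "b (k - 1) * x 0 \<noteq> 0"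
  shows "inR k a b c (\<lambda>p. if p = j * k - 1 then 1 else 0)"
  unfolding inR_def
proof (intro exI conjI allI)
  let ?u = "\<lambda>n. if n < j * k then 0 else x (n - j * k)"
  show "is_l2 (\<lambda>n. (1 / (b (k - 1) * x 0)) * ?u n)"
    by (intro l2_scale l2_shift l2)
  fix n
  show "ktoep_apply k a b c (\<lambda>n. (1 / (b (k - 1) * x 0)) * ?u n) n = (if n = j * k - 1 then 1 else 0)"
    by (simp only: ktoep_scale shift_apply[OF k j T]) (use beta in simp)
qed


lemma vv_exists:
  fixes a b c :: "nat \<Rightarrow> complex" and k r :: nat
  assumes r: "r < k - 1"
    and inj: "\<not> (\<exists>v :: complex vec. dim_vec v = k - 1 \<and> v \<noteq> 0\<^sub>v (k - 1) \<and>
            mat (k - 1) (k - 1) (\<lambda>(i, j). A0 k a b c $$ (i, j)) *\<^sub>v v = 0\<^sub>v (k - 1))"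
  shows "\<exists>vv. \<forall>r'<k - 1. a r' * vv r' + (if Suc r' < k - 1 then b r' * vv (Suc r') else 0)
            + (if 1 \<le> r' then c (r' - 1) * vv (r' - 1) else 0) = (if r' = r then 1 else 0)"
proof -
  define M where "M = mat (k - 1) (k - 1) (\<lambda>(i, j). A0 k a b c $$ (i, j))"
  have Mc: "M \<in> carrier_mat (k - 1) (k - 1)" by (simp add: M_def)
  have dM: "det M \<noteq> 0"
  proof
    assume "det M = 0"
    then obtain v where v1: "v \<in> carrier_vec (k - 1)" and v2: "v \<noteq> 0\<^sub>v (k - 1)" and v3: "M *\<^sub>v v = 0\<^sub>v (k - 1)"
      using det_0_iff_vec_prod_zero[OF Mc] by blast
    have "dim_vec v = k - 1" using v1 by simp
    thus False using inj v2 v3 unfolding M_def by blast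
  qed
  define e where "e = (unit_vec (k - 1) r :: complex vec)"
  have ec: "e \<in> carrier_vec (k - 1)" by (simp add: e_def)
  define v where "v = (1 / det M) \<cdot>\<^sub>v (adj_mat M *\<^sub>v e)"
  have ac: "adj_mat M \<in> carrier_mat (k - 1) (k - 1)" using adj_mat(1)[OF Mc] .
  have "M *\<^sub>v (adj_mat M *\<^sub>v e) = (M * adj_mat M) *\<^sub>v e"
    using Mc ac ec by simp
  also have "\<dots> = (det M \<cdot>\<^sub>m 1\<^sub>m (k - 1)) *\<^sub>v e" using adj_mat(2)[OF Mc] by simp
  also have "\<dots> = det M \<cdot>\<^sub>v e"
  proof (rule eq_vecI)
    fix i assume "i < dim_vec (det M \<cdot>\<^sub>v e)"
    hence i: "i < k - 1" using ec by simp
    have "(\<Sum>ia = 0..<k - 1. det M * (if ia = i then 1 else 0) * e $ ia) = (\<Sum>ia = 0..<k - 1. if ia = i then det M * e $ ia else 0)"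
      by (rule sum.cong) auto
    also have "\<dots> = det M * e $ i" using i by simp
    finally show "((det M \<cdot>\<^sub>m 1\<^sub>m (k - 1)) *\<^sub>v e) $ i = (det M \<cdot>\<^sub>v e) $ i"
      using i ec by (simp add: scalar_prod_def)
  qed (use ec in simp)
  finally have Me: "M *\<^sub>v (adj_mat M *\<^sub>v e) = det M \<cdot>\<^sub>v e" .
  have vc: "v \<in> carrier_vec (k - 1)" using ac ec by (simp add: v_def)
  have Mv: "M *\<^sub>v v = e"
    unfolding v_def using Mc ac ec dM by (simp add: mult_mat_vec Me smult_smult_assoc)
  show ?thesis
  proof (intro exI allI impI)
    fix r' assume r': "r' < k - 1"
    have "(M *\<^sub>v v) $ r' = (\<Sum>i<k - 1. A0 k a b c $$ (r', i) * v $ i)"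
      using r' Mc vc by (simp add: M_def scalar_prod_def lessThan_atLeast0)
    also have "\<dots> = (\<Sum>i<k - 1. ((if r' = i then a r' else 0) + (if i = Suc r' then b r' else 0)
            + (if r' = Suc i then c i else 0)) * v $ i)"
      by (rule sum.cong) (use r' in \<open>auto simp: A0_entry\<close>)
    also have "\<dots> = a r' * v $ r' + (if Suc r' < k - 1 then b r' * v $ (Suc r') else 0)
         + (if 1 \<le> r' then c (r' - 1) * v $ (r' - 1) else 0)"
      by (rule tri_sum[OF r'])
    finally show "a r' * v $ r' + (if Suc r' < k - 1 then b r' * v $ (Suc r') else 0)
         + (if 1 \<le> r' then c (r' - 1) * v $ (r' - 1) else 0) = (if r' = r then 1 else 0)"
      using Mv r' r by (simp add: e_def)
  qed
qed


lemma mod_blk: "r < k \<Longrightarrow> (m * k + r) mod k = (r::nat)"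
proof -
  assume "r < k"
  have "(m * k + r) mod k = r mod k" by (simp only: mod_mult_self3)
  thus ?thesis using \<open>r < k\<close> by simp
qed

lemma blockz_apply:
  fixes a b c vv :: "nat \<Rightarrow> complex" and k r m p :: nat
  assumes k: "k \<ge> 2" and r: "r < k - 1"
    and P: "\<forall>r'<k - 1. a r' * vv r' + (if Suc r' < k - 1 then b r' * vv (Suc r') else 0)
            + (if 1 \<le> r' then c (r' - 1) * vv (r' - 1) else 0) = (if r' = r then 1 else 0)"
  shows "ktoep_apply k a b c (\<lambda>p. if m * k \<le> p \<and> p < m * k + (k - 1) then vv (p - m * k) else 0) p
    = (if p = m * k + r then 1 else 0) + (if p = m * k + (k - 1) then c (k - 2) * vv (k - 2) else 0)
      + (if 1 \<le> m \<and> p = m * k - 1 then b (k - 1) * vv 0 else 0)"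
proof -
  define z where "z = (\<lambda>p. if m * k \<le> p \<and> p < m * k + (k - 1) then vv (p - m * k) else 0)"
  have Tz: "ktoep_apply k a b c z p = a (p mod k) * z p + b (p mod k) * z (Suc p)
      + (if p = 0 then 0 else c ((p - 1) mod k) * z (p - 1))"
    by (simp add: ktoep_apply_def)
  consider (A) r' where "p = m * k + r'" "r' < k - 1" | (B) "p = m * k + (k - 1)"
    | (C) "1 \<le> m" "p = m * k - 1" | (D) "Suc p < m * k" | (E) "p > m * k + (k - 1)"
  proof -
    show thesis
    proof (cases "m * k \<le> p")
      case True
      define r' where "r' = p - m * k"
      have pr: "p = m * k + r'" using True by (simp add: r'_def)
      show thesis
      proof (cases "r' < k - 1")
        case True thus thesis using that(1) pr by blast
      next
        case False
        thus thesis using that(2,5) pr by (cases "r' = k - 1") auto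
      qed
    next
      case False
      show thesis
      proof (cases "Suc p = m * k")
        case True
        hence "1 \<le> m" by (cases m) auto
        thus thesis using that(3) True by simp
      next
        case F2: False
        thus thesis using that(4) False by simp
      qed
    qed
  qed
  hence "ktoep_apply k a b c z p = (if p = m * k + r then 1 else 0) + (if p = m * k + (k - 1) then c (k - 2) * vv (k - 2) else 0)
      + (if 1 \<le> m \<and> p = m * k - 1 then b (k - 1) * vv 0 else 0)"
  proof cases
    case (A r')
    have pm: "p mod k = r'" using A k by (simp add: mod_blk)
    have zp: "z p = vv r'" using A by (simp add: z_def)
    have zs: "z (Suc p) = (if Suc r' < k - 1 then vv (Suc r') else 0)" using A by (auto simp: z_def)
    have cterm: "(if p = 0 then 0 else c ((p - 1) mod k) * z (p - 1)) = (if 1 \<le> r' then c (r' - 1) * vv (r' - 1) else 0)"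
    proof (cases "1 \<le> r'")
      case True
      have e: "p - 1 = m * k + (r' - 1)" using A True by simp
      have "(p - 1) mod k = r' - 1" unfolding e using A k by (simp add: mod_blk)
      moreover have "z (p - 1) = vv (r' - 1)" unfolding e z_def using A by simp
      ultimately show ?thesis using A True by simp
    next
      case False
      hence "r' = 0" by simp
      have "p = 0 \<or> z (p - 1) = 0"
      proof (cases "p = 0")
        case False
        hence "p - 1 < m * k" using A \<open>r' = 0\<close> by simp
        thus ?thesis by (simp add: z_def)
      qed simp
      thus ?thesis using False by auto
    qed
    have Pr: "a r' * vv r' + (if Suc r' < k - 1 then b r' * vv (Suc r') else 0)
            + (if 1 \<le> r' then c (r' - 1) * vv (r' - 1) else 0) = (if r' = r then 1 else 0)"
      using P A(2) by blast
    have bz: "b r' * z (Suc p) = (if Suc r' < k - 1 then b r' * vv (Suc r') else 0)" using zs by simp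
    have "ktoep_apply k a b c z p = a r' * vv r' + (if Suc r' < k - 1 then b r' * vv (Suc r') else 0)
            + (if 1 \<le> r' then c (r' - 1) * vv (r' - 1) else 0)"
      unfolding Tz pm zp bz cterm by (rule refl)
    also note Pr
    finally have "ktoep_apply k a b c z p = (if r' = r then 1 else 0)" .
    moreover have "p \<noteq> m * k + (k - 1)" "(p = m * k + r) = (r' = r)"
      using A k by auto
    moreover have "\<not> (1 \<le> m \<and> p = m * k - 1)"
    proof
      assume h: "1 \<le> m \<and> p = m * k - 1"
      hence "m * k \<ge> 1" using k by (simp add: one_le_mult_iff)
      thus False using h A by linarith
    qed
    ultimately show ?thesis by auto
  next
    case B
    have pm: "p mod k = k - 1" unfolding B by (rule mod_blk) (use k in simp)
    have zp: "z p = 0" "z (Suc p) = 0" using B by (auto simp: z_def)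
    have e: "p - 1 = m * k + (k - 2)" using B k by simp
    have "(p - 1) mod k = k - 2" unfolding e by (rule mod_blk) (use k in simp)
    moreover have "z (p - 1) = vv (k - 2)"
    proof -
      have cnd: "m * k \<le> m * k + (k - 2) \<and> m * k + (k - 2) < m * k + (k - 1)" using k by linarith
      show ?thesis unfolding e z_def by (simp only: cnd if_True) simp
    qed
    moreover have "p \<noteq> 0" using B k by simp
    ultimately have "ktoep_apply k a b c z p = c (k - 2) * vv (k - 2)" using Tz zp by simp
    moreover have "p \<noteq> m * k + r" "\<not> (1 \<le> m \<and> p = m * k - 1)" using B r k by auto
    ultimately show ?thesis using B by auto
  next
    case C
    obtain m1 where m1: "m = Suc m1" using C by (cases m) auto
    have e: "p = m1 * k + (k - 1)" using C k by (simp add: m1)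
    have pm: "p mod k = k - 1" unfolding e by (rule mod_blk) (use k in simp)
    have "z p = 0" "z (Suc p) = vv 0" "z (p - 1) = 0" using C k e m1 by (auto simp: z_def)
    hence "ktoep_apply k a b c z p = b (k - 1) * vv 0" using Tz pm by simp
    moreover have mk1: "m * k \<ge> 1" using C k by (simp add: one_le_mult_iff)
    moreover have "p \<noteq> m * k + r" using C mk1 by linarith
    moreover have "p \<noteq> m * k + (k - 1)" using C mk1 by linarith
    ultimately show ?thesis using C by auto
  next
    case D
    have "z p = 0" "z (Suc p) = 0" "z (p - 1) = 0" using D by (auto simp: z_def)
    hence "ktoep_apply k a b c z p = 0" using Tz by simp
    moreover have "p \<noteq> m * k + r" "p \<noteq> m * k + (k - 1)" "p \<noteq> m * k - 1" using D by auto
    ultimately show ?thesis by auto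
  next
    case E
    have "z p = 0" "z (Suc p) = 0" "z (p - 1) = 0" using E by (auto simp: z_def)
    hence "ktoep_apply k a b c z p = 0" using Tz by simp
    moreover have "p \<noteq> m * k + r" "p \<noteq> m * k + (k - 1)" "p \<noteq> m * k - 1" using E r by auto
    ultimately show ?thesis by auto
  qed
  thus ?thesis by (simp add: z_def)
qed


lemma E2:
  fixes a b c :: "nat \<Rightarrow> complex" and k n :: nat
  assumes k: "k \<ge> 1" and nr: "n mod k < k - 1"
    and inj: "\<not> (\<exists>v :: complex vec. dim_vec v = k - 1 \<and> v \<noteq> 0\<^sub>v (k - 1) \<and>
            mat (k - 1) (k - 1) (\<lambda>(i, j). A0 k a b c $$ (i, j)) *\<^sub>v v = 0\<^sub>v (k - 1))"
    and allE1: "\<And>j. j \<ge> 1 \<Longrightarrow> inR k a b c (\<lambda>p. if p = j * k - 1 then 1 else 0)"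
  shows "inR k a b c (\<lambda>p. if p = n then 1 else 0)"
proof -
  have k2: "k \<ge> 2" using nr by linarith
  define r where "r = n mod k"
  define m where "m = n div k"
  have n: "n = m * k + r" by (simp add: r_def m_def)
  have r: "r < k - 1" using nr by (simp add: r_def)
  obtain vv where P: "\<forall>r'<k - 1. a r' * vv r' + (if Suc r' < k - 1 then b r' * vv (Suc r') else 0)
            + (if 1 \<le> r' then c (r' - 1) * vv (r' - 1) else 0) = (if r' = r then 1 else 0)"
    using vv_exists[OF r inj] by blast
  define z where "z = (\<lambda>p. if m * k \<le> p \<and> p < m * k + (k - 1) then vv (p - m * k) else 0)"
  define F where "F = (\<lambda>p. (if p = m * k + r then 1 else 0) + (if p = m * k + (k - 1) then c (k - 2) * vv (k - 2) else 0)
      + (if 1 \<le> m \<and> p = m * k - 1 then b (k - 1) * vv 0 else (0::complex)))"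
  have "inR k a b c F"
    unfolding inR_def
  proof (intro exI conjI allI)
    show "is_l2 z" by (rule l2_fin[of "m * k + k"]) (auto simp: z_def)
    fix p show "ktoep_apply k a b c z p = F p"
      unfolding z_def F_def by (rule blockz_apply[OF k2 r P])
  qed
  moreover have G1: "inR k a b c (\<lambda>p. if p = m * k + (k - 1) then 1 else 0)"
  proof -
    have "Suc m * k - 1 = m * k + (k - 1)" using k by simp
    thus ?thesis using allE1[of "Suc m"] by simp
  qed
  moreover have G2: "inR k a b c (\<lambda>p. if 1 \<le> m \<and> p = m * k - 1 then 1 else 0)"
  proof (cases "1 \<le> m")
    case True thus ?thesis using allE1[of m] by simp
  next
    case False thus ?thesis using inR_zero by simp
  qed
  ultimately have "inR k a b c (\<lambda>p. (F p + (- (c (k - 2) * vv (k - 2))) * (if p = m * k + (k - 1) then 1 else 0))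
       + (- (b (k - 1) * vv 0)) * (if 1 \<le> m \<and> p = m * k - 1 then 1 else 0))"
    by (intro inR_comb)
  moreover have "(\<lambda>p. (F p + (- (c (k - 2) * vv (k - 2))) * (if p = m * k + (k - 1) then 1 else 0))
       + (- (b (k - 1) * vv 0)) * (if 1 \<le> m \<and> p = m * k - 1 then 1 else 0)) = (\<lambda>p. if p = n then 1 else 0)"
    by (rule ext) (simp add: F_def n)
  ultimately show ?thesis by simp
qed

lemma all_unit:
  fixes x a b c :: "nat \<Rightarrow> complex" and k n :: nat
  assumes k: "k \<ge> 1" and T: "\<And>n. ktoep_apply k a b c x n = 0"
    and l2: "is_l2 x" and beta: "b (k - 1) * x 0 \<noteq> 0"
    and inj: "\<not> (\<exists>v :: complex vec. dim_vec v = k - 1 \<and> v \<noteq> 0\<^sub>v (k - 1) \<and>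
            mat (k - 1) (k - 1) (\<lambda>(i, j). A0 k a b c $$ (i, j)) *\<^sub>v v = 0\<^sub>v (k - 1))"
  shows "inR k a b c (\<lambda>p. if p = n then 1 else 0)"
proof -
  have allE1: "\<And>j. j \<ge> 1 \<Longrightarrow> inR k a b c (\<lambda>p. if p = j * k - 1 then 1 else 0)"
    using E1[OF k _ T l2 beta] by blast
  show ?thesis
  proof (cases "n mod k < k - 1")
    case True thus ?thesis using E2[OF k True inj allE1] by blast
  next
    case False
    have "n mod k < k" using k by simp
    hence nm: "n mod k = k - 1" using False by linarith
    have e1: "n div k * k + (k - 1) = n" using nm div_mult_mod_eq[of n k] by simp
    have e2: "Suc (n div k) * k = k + n div k * k" by simp
    have "Suc (n div k) * k - 1 = n" using e1 e2 k by linarith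
    thus ?thesis using allE1[of "Suc (n div k)"] by simp
  qed
qed


lemma trunc_inR:
  assumes U: "\<And>n. inR k a b c (\<lambda>p. if p = n then 1 else 0)"
  shows "inR k a b c (\<lambda>p. if p < N then y p else 0)"
proof (induction N)
  case 0 thus ?case using inR_zero by simp
next
  case (Suc N)
  have "inR k a b c (\<lambda>p. (if p < N then y p else 0) + y N * (if p = N then 1 else 0))"
    by (rule inR_comb[OF Suc U])
  moreover have "(\<lambda>p. (if p < N then y p else 0) + y N * (if p = N then 1 else 0)) = (\<lambda>p. if p < Suc N then y p else 0)"
  proof (rule ext)
    fix p show "(if p < N then y p else 0) + y N * (if p = N then 1 else 0) = (if p < Suc N then y p else 0)"
      by (cases "p < N"; cases "p = N") auto
  qed
  ultimately show ?case by simp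
qed

lemma dense_from_units:
  assumes U: "\<And>n. inR k a b c (\<lambda>p. if p = n then 1 else 0)"
  shows "dense_range k a b c"
  unfolding dense_range_def
proof (intro allI impI)
  fix y :: "nat \<Rightarrow> complex" and \<epsilon> :: real
  assume y: "is_l2 y" and e: "\<epsilon> > 0"
  define g where "g n = (cmod (y n))\<^sup>2" for n
  have sg: "summable g" using y unfolding is_l2_def g_def[abs_def] .
  obtain N where N: "norm (\<Sum>i. g (i + N)) < \<epsilon>\<^sup>2"
    using suminf_exist_split[of "\<epsilon>\<^sup>2" g] e sg by auto
  obtain x where x: "is_l2 x" "\<And>n. ktoep_apply k a b c x n = (if n < N then y n else 0)"
    using trunc_inR[OF U, of N y] unfolding inR_def by blast
  define h where "h n = (if n < N then 0 else g n)" for n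
  have hx: "(\<lambda>n. (cmod (ktoep_apply k a b c x n - y n))\<^sup>2) = h"
    by (rule ext) (simp add: x h_def g_def norm_minus_commute)
  have sh: "summable h"
    by (rule summable_comparison_test[OF _ sg]) (auto simp: h_def g_def)
  have "suminf h = (\<Sum>i. h (i + N)) + (\<Sum>i<N. h i)"
    by (rule suminf_split_initial_segment[OF sh])
  also have "\<dots> = (\<Sum>i. g (i + N))" by (simp add: h_def)
  finally have hs: "suminf h = (\<Sum>i. g (i + N))" .
  have g0: "(\<Sum>i. g (i + N)) \<ge> 0"
  proof (rule suminf_nonneg)
    show "summable (\<lambda>i. g (i + N))" using sg summable_iff_shift[of g N] by simp
  qed (simp add: g_def)
  have "(\<Sum>i. g (i + N)) < \<epsilon>\<^sup>2" using N g0 by simp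
  hence "sqrt (\<Sum>i. g (i + N)) < sqrt (\<epsilon>\<^sup>2)" by (rule real_sqrt_less_mono)
  hence "sqrt (\<Sum>i. g (i + N)) < \<epsilon>" using e by simp
  thus "\<exists>x. is_l2 x \<and> l2_norm (\<lambda>n. ktoep_apply k a b c x n - y n) < \<epsilon>"
    using x(1) hx hs by (intro exI[of _ x]) (simp add: l2_norm_def)
qed

theorem theorem2p3:
  fixes k :: nat and a b c :: "nat \<Rightarrow> complex"
  assumes "k \<ge> 1"
    and "\<exists>z. cmod z = 1 \<and> det (symbol k a b c z) \<noteq> 0"
  shows "trivial_kernel k a b c
       \<or> dense_range k a b c
       \<or> (\<exists>v :: complex vec. dim_vec v = k - 1 \<and> v \<noteq> 0\<^sub>v (k - 1) \<and>
            mat (k - 1) (k - 1) (\<lambda>(i, j). A0 k a b c $$ (i, j)) *\<^sub>v v = 0\<^sub>v (k - 1))"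
proof (cases "trivial_kernel k a b c")
  case True thus ?thesis by simp
next
  case False
  then obtain x where x: "is_l2 x" "ktoep_apply k a b c x = (\<lambda>_. 0)" "x \<noteq> (\<lambda>_. 0)"
    unfolding trivial_kernel_def by blast
  have T: "\<And>n. ktoep_apply k a b c x n = 0" using x(2) by simp
  have beta: "b (k - 1) * x 0 \<noteq> 0"
  proof
    assume "b (k - 1) * x 0 = 0"
    hence "\<And>n. x n = 0" using ker_zero[OF assms(1) assms(2) T] by blast
    thus False using x(3) by auto
  qed
  show ?thesis
  proof (cases "\<exists>v :: complex vec. dim_vec v = k - 1 \<and> v \<noteq> 0\<^sub>v (k - 1) \<and>
            mat (k - 1) (k - 1) (\<lambda>(i, j). A0 k a b c $$ (i, j)) *\<^sub>v v = 0\<^sub>v (k - 1)")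
    case True thus ?thesis by simp
  next
    case inj: False
    have "dense_range k a b c"
      by (rule dense_from_units) (rule all_unit[OF assms(1) T x(1) beta inj])
    thus ?thesis by simp
  qed
qed

end
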